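(* Let $X$ be a real Banach space, considered with its weak topology, and let $X^*$ be its dual with the weak$^*$ topology; finite powers carry the product topologies. Let $\kappa$ be an infinite cardinal. Then $hL(X^n)\leq\kappa$ for every $n\in\mathbb N$ if and only if $hd((X^* )^n)\leq\kappa$ for every $n\in\mathbb N$.
   Context: $hd(Z)=\sup\{d(Y):Y\subseteq Z\}$ with $d(Y)$ the least size of a dense subset of $Y$; $hL(Z)=\sup\{L(Y):Y\subseteq Z\}$ with $L(Y)$ the least $\kappa$ such that every open cover of $Y$ has a subcover of size at most $\kappa$. The weak topology on $X$ is generated by the functionals in $X^*$; the weak$^*$ topology on $X^*$ is generated by the evaluations at points of $X$. *)

theory Defs
  imports "HOL-Analysis.Analysis" "HOL-Library.Equipollence"
begin

definition weak_topology :: "'a::real_normed_vector topology" where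
  "weak_topology =
     topology_generated_by {{x. blinfun_apply f x \<in> U} | (f :: 'a \<Rightarrow>\<^sub>L real) U. open U}"

text \<open>The weak* topology on X* = ('a \<Rightarrow>L real): generated by evaluations at points
  of X; this is the library's strong_operator_topology with target real.\<close>
definition weak_star_topology :: "('a::real_normed_vector \<Rightarrow>\<^sub>L real) topology" where
  "weak_star_topology = strong_operator_topology"

definition power_top :: "'a topology \<Rightarrow> nat \<Rightarrow> (nat \<Rightarrow> 'a) topology" where
  "power_top T n = product_topology (\<lambda>_. T) {..<n}"

definition hd_le :: "'a topology \<Rightarrow> 'k set \<Rightarrow> bool" where
  "hd_le T K \<longleftrightarrow>
     (\<forall>Y. Y \<subseteq> topspace T \<longrightarrow>
        (\<exists>D. D \<subseteq> Y \<and> D \<lesssim> K \<and> (subtopology T Y) closure_of D = Y))"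

definition hL_le :: "'a topology \<Rightarrow> 'k set \<Rightarrow> bool" where
  "hL_le T K \<longleftrightarrow>
     (\<forall>Y. Y \<subseteq> topspace T \<longrightarrow>
        (\<forall>\<U>. (\<forall>U\<in>\<U>. openin (subtopology T Y) U) \<and> Y \<subseteq> \<Union>\<U> \<longrightarrow>
           (\<exists>\<V>. \<V> \<subseteq> \<U> \<and> \<V> \<lesssim> K \<and> Y \<subseteq> \<Union>\<V>)))"

end

theory Submission
  imports Defs
begin
unbundle cardinal_syntax

lemma UN_lepoll_countable:
  assumes "infinite K" "countable I" "\<And>i. i \<in> I \<Longrightarrow> A i \<lesssim> K"
  shows "(\<Union>i\<in>I. A i) \<lesssim> K"
proof -
  have "I \<lesssim> K"
  proof -
    have "I \<lesssim> (UNIV::nat set)" using assms(2) unfolding countable_def lepoll_def by auto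
    moreover have "(UNIV::nat set) \<lesssim> K" using assms(1) infinite_le_lepoll by blast
    ultimately show ?thesis using lepoll_trans by blast
  qed
  then have "|I| \<le>o |K|" unfolding lepoll_def card_of_ordLeq .
  moreover have "\<forall>i\<in>I. |A i| \<le>o |K|" using assms(3) unfolding lepoll_def card_of_ordLeq by blast
  ultimately have "|\<Union>i\<in>I. A i| \<le>o |K|" using card_of_UNION_ordLeq_infinite assms(1) by blast
  then show ?thesis unfolding lepoll_def card_of_ordLeq[symmetric] .
qed

lemma topspace_weak [simp]: "topspace (weak_topology :: 'a::real_normed_vector topology) = UNIV"
proof -
  have "UNIV \<in> {{x. blinfun_apply f x \<in> U} | (f :: 'a \<Rightarrow>\<^sub>L real) U. open U}" by auto
  then show ?thesis unfolding weak_topology_def by auto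
qed

lemma topspace_wstar [simp]: "topspace weak_star_topology = UNIV"
  by (simp add: weak_star_topology_def strong_operator_topology_topspace)

lemma weak_eval_cont: "continuous_map weak_topology euclideanreal (blinfun_apply f)"
  unfolding continuous_map_def
proof (intro conjI allI impI)
  fix U :: "real set" assume "openin euclideanreal U"
  then have "{x \<in> topspace weak_topology. blinfun_apply f x \<in> U} \<in> {{x. blinfun_apply f x \<in> U} | (f :: 'a \<Rightarrow>\<^sub>L real) U. open U}" by auto
  then show "openin weak_topology {x \<in> topspace weak_topology. blinfun_apply f x \<in> U}"
    unfolding weak_topology_def by (rule topology_generated_by_Basis)
qed auto

lemma wstar_eval_cont: "continuous_map weak_star_topology euclideanreal (\<lambda>f. blinfun_apply f x)"
  unfolding weak_star_topology_def by (rule strong_operator_topology_continuous_evaluation)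

lemma open_fin_preimage:
  assumes "finite K" "\<And>k. k \<in> K \<Longrightarrow> continuous_map X euclideanreal (g k)" "\<And>k. k \<in> K \<Longrightarrow> open (Op k)"
  shows "openin X {x\<in>topspace X. \<forall>k\<in>K. g k x \<in> Op k}"
  using assms
proof (induction K rule: finite_induct)
  case empty then show ?case by simp
next
  case (insert k K)
  have "{x\<in>topspace X. \<forall>k\<in>insert k K. g k x \<in> Op k} = {x\<in>topspace X. g k x \<in> Op k} \<inter> {x\<in>topspace X. \<forall>k\<in>K. g k x \<in> Op k}" by auto
  moreover have "openin X {x\<in>topspace X. g k x \<in> Op k}"
    using insert.prems openin_continuous_map_preimage by (simp add: continuous_map_def)
  ultimately show ?case using insert by auto
qed

definition Bw :: "(('a::real_normed_vector \<Rightarrow>\<^sub>L real) \<times> rat \<times> rat) list \<Rightarrow> 'a set" where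
  "Bw Ls = {x. \<forall>(f,a,b)\<in>set Ls. of_rat a < blinfun_apply f x \<and> blinfun_apply f x < of_rat b}"

lemma Bw_append: "Bw (L1 @ L2) = Bw L1 \<inter> Bw L2"
  unfolding Bw_def by (simp add: ball_Un Collect_conj_eq)

lemma weak_nbhd_gen:
  assumes "generate_topology_on {{x. blinfun_apply f x \<in> U} | (f :: 'a::real_normed_vector \<Rightarrow>\<^sub>L real) U. open U} W"
  shows "\<forall>v\<in>W. \<exists>Ls. v \<in> Bw Ls \<and> Bw Ls \<subseteq> W"
  using assms
proof (induction rule: generate_topology_on.induct)
  case Empty then show ?case by simp
next
  case (Int a b)
  show ?case
  proof
    fix v assume "v \<in> a \<inter> b"
    then obtain L1 L2 where "v \<in> Bw L1" "Bw L1 \<subseteq> a" "v \<in> Bw L2" "Bw L2 \<subseteq> b" using Int.IH by blast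
    then show "\<exists>Ls. v \<in> Bw Ls \<and> Bw Ls \<subseteq> a \<inter> b" by (intro exI[of _ "L1 @ L2"]) (auto simp: Bw_append)
  qed
next
  case (UN K)
  show ?case
  proof
    fix v assume "v \<in> \<Union>K"
    then obtain k where "k \<in> K" "v \<in> k" by blast
    then obtain Ls where "v \<in> Bw Ls" "Bw Ls \<subseteq> k" using UN.IH by blast
    then show "\<exists>Ls. v \<in> Bw Ls \<and> Bw Ls \<subseteq> \<Union>K" using \<open>k \<in> K\<close> by blast
  qed
next
  case (Basis s)
  then obtain f :: "'a \<Rightarrow>\<^sub>L real" and U where s: "s = {x. blinfun_apply f x \<in> U}" and U: "open U" by auto
  show ?case
  proof
    fix v assume "v \<in> s"
    then have "blinfun_apply f v \<in> U" using s by auto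
    then obtain e where e: "e > 0" "ball (blinfun_apply f v) e \<subseteq> U" using U open_contains_ball by blast
    obtain a :: rat where a: "blinfun_apply f v - e < of_rat a" "of_rat a < blinfun_apply f v"
      using of_rat_dense[of "blinfun_apply f v - e" "blinfun_apply f v"] e by auto
    obtain b :: rat where b: "blinfun_apply f v < of_rat b" "of_rat b < blinfun_apply f v + e"
      using of_rat_dense[of "blinfun_apply f v" "blinfun_apply f v + e"] e by auto
    have "v \<in> Bw [(f,a,b)]" using a b by (simp add: Bw_def)
    moreover have "Bw [(f,a,b)] \<subseteq> s"
    proof
      fix x assume "x \<in> Bw [(f,a,b)]"
      then have "of_rat a < blinfun_apply f x" "blinfun_apply f x < of_rat b" by (auto simp: Bw_def)
      then have "blinfun_apply f x \<in> ball (blinfun_apply f v) e" using a b by (auto simp: dist_real_def)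
      then show "x \<in> s" using e s by auto
    qed
    ultimately show "\<exists>Ls. v \<in> Bw Ls \<and> Bw Ls \<subseteq> s" by blast
  qed
qed

lemma weak_nbhd:
  assumes "openin (weak_topology :: 'a::real_normed_vector topology) W" "v \<in> W"
  shows "\<exists>Ls. v \<in> Bw Ls \<and> Bw Ls \<subseteq> W"
  using weak_nbhd_gen[OF openin_topology_generated_by[OF assms(1)[unfolded weak_topology_def]]] assms(2) by blast

definition Bp :: "(nat \<times> ('a::real_normed_vector \<Rightarrow>\<^sub>L real) \<times> rat \<times> rat) list \<Rightarrow> (nat \<Rightarrow> 'a) set" where
  "Bp Ls = {x. \<forall>(i,f,a,b)\<in>set Ls. of_rat a < blinfun_apply f (x i) \<and> blinfun_apply f (x i) < of_rat b}"

lemma topspace_power_top: "topspace (power_top T n) = PiE {..<n} (\<lambda>_. topspace T)"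
  unfolding power_top_def by simp

lemma weak_prod_nbhd:
  assumes "openin (power_top (weak_topology :: 'a::real_normed_vector topology) n) W" "y \<in> W"
  shows "\<exists>Ls. y \<in> Bp Ls \<and> Bp Ls \<inter> topspace (power_top weak_topology n) \<subseteq> W"
proof -
  obtain U where U: "\<forall>i\<in>{..<n}. openin weak_topology (U i)" "y \<in> PiE {..<n} U" "PiE {..<n} U \<subseteq> W"
    using assms unfolding power_top_def openin_product_topology_alt by blast
  have "\<forall>i\<in>{..<n}. \<exists>L. y i \<in> Bw L \<and> Bw L \<subseteq> U i"
  proof
    fix i assume i: "i \<in> {..<n}"
    then have "openin weak_topology (U i)" "y i \<in> U i" using U(1,2) by (auto simp: PiE_iff)
    then show "\<exists>L. y i \<in> Bw L \<and> Bw L \<subseteq> U i" by (rule weak_nbhd)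
  qed
  from bchoice[OF this] obtain L where L0: "\<forall>i\<in>{..<n}. y i \<in> Bw (L i) \<and> Bw (L i) \<subseteq> U i" by blast
  have L: "\<And>i. i < n \<Longrightarrow> y i \<in> Bw (L i) \<and> Bw (L i) \<subseteq> U i" using L0 by simp
  define Ls where "Ls = concat (map (\<lambda>i. map (\<lambda>(f,a,b). (i,f,a,b)) (L i)) [0..<n])"
  have memLs: "(i,f,a,b) \<in> set Ls \<longleftrightarrow> i < n \<and> (f,a,b) \<in> set (L i)" for i f a b
    unfolding Ls_def by auto
  have BpLs: "x \<in> Bp Ls \<longleftrightarrow> (\<forall>i<n. x i \<in> Bw (L i))" for x
    unfolding Bp_def Bw_def using memLs by fastforce
  show ?thesis
  proof (intro exI conjI)
    show "y \<in> Bp Ls" using BpLs L by auto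
    show "Bp Ls \<inter> topspace (power_top weak_topology n) \<subseteq> W"
    proof
      fix x assume x: "x \<in> Bp Ls \<inter> topspace (power_top weak_topology n)"
      then have "x \<in> PiE {..<n} U" using BpLs L unfolding topspace_power_top by (auto simp: PiE_iff)
      then show "x \<in> W" using U(3) by auto
    qed
  qed
qed

lemma wstar_nbhd:
  assumes "openin (weak_star_topology :: ('a::real_normed_vector \<Rightarrow>\<^sub>L real) topology) U" "g \<in> U"
  shows "\<exists>P e. finite P \<and> e > 0 \<and> {h. \<forall>p\<in>P. \<bar>blinfun_apply h p - blinfun_apply g p\<bar> < e} \<subseteq> U"
proof -
  obtain V :: "('a \<Rightarrow> real) set" where V: "openin euclidean V" "U = blinfun_apply -` V"
    using assms(1) unfolding weak_star_topology_def strong_operator_topology_def openin_pullback_topology by auto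
  have "openin (product_topology (\<lambda>_. euclidean) UNIV) V" using V(1) by (simp add: euclidean_product_topology)
  moreover have "blinfun_apply g \<in> V" using V assms(2) by auto
  ultimately obtain Uf where Uf: "finite {i \<in> UNIV. Uf i \<noteq> topspace euclideanreal}"
       "\<forall>i\<in>UNIV. openin euclideanreal (Uf i)" "blinfun_apply g \<in> PiE UNIV Uf" "PiE UNIV Uf \<subseteq> V"
    unfolding openin_product_topology_alt by blast
  define J where "J = {i. Uf i \<noteq> UNIV}"
  have fJ: "finite J" using Uf(1) unfolding J_def by simp
  have "\<forall>p. \<exists>e. e > 0 \<and> ball (blinfun_apply g p) e \<subseteq> Uf p"
  proof
    fix p
    have "openin euclideanreal (Uf p)" using Uf(2) by (rule bspec) (rule UNIV_I)
    then have "open (Uf p)" by (subst open_openin)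
    moreover have "blinfun_apply g p \<in> Uf p" using PiE_mem[OF Uf(3)] by blast
    ultimately show "\<exists>e. e > 0 \<and> ball (blinfun_apply g p) e \<subseteq> Uf p" using open_contains_ball by blast
  qed
  from choice[OF this] obtain ep where ep0: "\<forall>p. ep p > 0 \<and> ball (blinfun_apply g p) (ep p) \<subseteq> Uf p" by blast
  have ep: "\<And>p. ep p > 0" "\<And>p. ball (blinfun_apply g p) (ep p) \<subseteq> Uf p" using ep0 by auto
  define e where "e = Min (insert 1 (ep ` J))"
  have epos: "e > 0" unfolding e_def using fJ ep(1) by auto
  have ele: "p \<in> J \<Longrightarrow> e \<le> ep p" for p unfolding e_def using fJ by auto
  show ?thesis
  proof (intro exI conjI)
    show "{h. \<forall>p\<in>J. \<bar>blinfun_apply h p - blinfun_apply g p\<bar> < e} \<subseteq> U"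
    proof
      fix h assume h: "h \<in> {h. \<forall>p\<in>J. \<bar>blinfun_apply h p - blinfun_apply g p\<bar> < e}"
      have "blinfun_apply h p \<in> Uf p" for p
      proof (cases "p \<in> J")
        case True
        then have "\<bar>blinfun_apply h p - blinfun_apply g p\<bar> < ep p" using h ele[of p] by auto
        then have "blinfun_apply h p \<in> ball (blinfun_apply g p) (ep p)" by (simp add: dist_real_def abs_minus_commute)
        then show ?thesis using ep(2) by blast
      next
        case False then show ?thesis unfolding J_def by auto
      qed
      then have "blinfun_apply h \<in> PiE UNIV Uf" by auto
      then show "h \<in> U" using Uf(4) V(2) by auto
    qed
  qed (use fJ epos in auto)
qed

lemma wstar_prod_nbhd:
  assumes "openin (power_top (weak_star_topology :: ('a::real_normed_vector \<Rightarrow>\<^sub>L real) topology) n) W" "y \<in> W"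
  shows "\<exists>P e. finite P \<and> e > 0 \<and> {G \<in> topspace (power_top weak_star_topology n). \<forall>i<n. \<forall>p\<in>P. \<bar>blinfun_apply (G i) p - blinfun_apply (y i) p\<bar> < e} \<subseteq> W"
proof -
  obtain U where U: "\<forall>i\<in>{..<n}. openin weak_star_topology (U i)" "y \<in> PiE {..<n} U" "PiE {..<n} U \<subseteq> W"
    using assms unfolding power_top_def openin_product_topology_alt by blast
  have "\<forall>i\<in>{..<n}. \<exists>P e. finite P \<and> e > 0 \<and> {h. \<forall>p\<in>P. \<bar>blinfun_apply h p - blinfun_apply (y i) p\<bar> < e} \<subseteq> U i"
  proof
    fix i assume i: "i \<in> {..<n}"
    then have "openin weak_star_topology (U i)" "y i \<in> U i" using U(1,2) by (auto simp: PiE_iff)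
    then show "\<exists>P e. finite P \<and> e > 0 \<and> {h. \<forall>p\<in>P. \<bar>blinfun_apply h p - blinfun_apply (y i) p\<bar> < e} \<subseteq> U i"
      by (rule wstar_nbhd)
  qed
  from bchoice[OF this] obtain P where "\<forall>i\<in>{..<n}. \<exists>e. finite (P i) \<and> e > 0 \<and> {h. \<forall>p\<in>P i. \<bar>blinfun_apply h p - blinfun_apply (y i) p\<bar> < e} \<subseteq> U i" by blast
  from bchoice[OF this] obtain ep where Pe0: "\<forall>i\<in>{..<n}. finite (P i) \<and> ep i > 0 \<and> {h. \<forall>p\<in>P i. \<bar>blinfun_apply h p - blinfun_apply (y i) p\<bar> < ep i} \<subseteq> U i" by blast
  have Pe: "\<And>i. i < n \<Longrightarrow> finite (P i) \<and> ep i > 0 \<and> {h. \<forall>p\<in>P i. \<bar>blinfun_apply h p - blinfun_apply (y i) p\<bar> < ep i} \<subseteq> U i"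
    using Pe0 by simp
  define e where "e = Min (insert 1 (ep ` {..<n}))"
  have epos: "e > 0" unfolding e_def using Pe by auto
  have ele: "i < n \<Longrightarrow> e \<le> ep i" for i unfolding e_def by auto
  show ?thesis
  proof (intro exI conjI)
    show "finite (\<Union>i<n. P i)" using Pe by auto
    show "{G \<in> topspace (power_top weak_star_topology n). \<forall>i<n. \<forall>p\<in>(\<Union>i<n. P i). \<bar>blinfun_apply (G i) p - blinfun_apply (y i) p\<bar> < e} \<subseteq> W"
    proof
      fix G assume G: "G \<in> {G \<in> topspace (power_top weak_star_topology n). \<forall>i<n. \<forall>p\<in>(\<Union>i<n. P i). \<bar>blinfun_apply (G i) p - blinfun_apply (y i) p\<bar> < e}"
      have "G i \<in> U i" if "i < n" for i
      proof -
        have "\<forall>p\<in>P i. \<bar>blinfun_apply (G i) p - blinfun_apply (y i) p\<bar> < ep i"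
          using G that ele[OF that] by fastforce
        then show ?thesis using Pe[OF that] by blast
      qed
      moreover have "G \<in> extensional {..<n}" using G unfolding topspace_power_top by (auto simp: PiE_iff)
      ultimately have "G \<in> PiE {..<n} U" by (auto simp: PiE_iff)
      then show "G \<in> W" using U(3) by auto
    qed
  qed (use epos in auto)
qed


lemma dirB:
  fixes K :: "'k set"
  assumes infK: "infinite K"
    and hL: "\<forall>m::nat. hL_le (power_top (weak_topology :: 'a::real_normed_vector topology) m) K"
  shows "hd_le (power_top (weak_star_topology :: ('a \<Rightarrow>\<^sub>L real) topology) n) K"
  unfolding hd_le_def
proof (intro allI impI)
  fix Y assume Ysub: "Y \<subseteq> topspace (power_top (weak_star_topology :: ('a \<Rightarrow>\<^sub>L real) topology) n)"
  define r :: "nat \<Rightarrow> real" where "r N = 1 / real (Suc N)" for N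
  define V where "V = (\<lambda>(m::nat, N::nat, q::rat list list) (d::nat \<Rightarrow> ('a \<Rightarrow>\<^sub>L real)).
      {x \<in> topspace (power_top (weak_topology :: 'a topology) m). \<forall>i<n. \<forall>j<m. \<bar>blinfun_apply (d i) (x j) - of_rat (q!i!j)\<bar> < r N})"
  have Vopen: "openin (power_top weak_topology (fst idx)) (V idx d)" for idx d
  proof -
    obtain m N q where idx: "idx = (m, N, q)" by (cases idx) auto
    have "openin (power_top weak_topology m) {x \<in> topspace (power_top (weak_topology :: 'a topology) m). \<forall>k\<in>{..<n}\<times>{..<m}. (\<lambda>(i,j) x. blinfun_apply (d i) (x j)) k x \<in> (\<lambda>(i,j). ball (of_rat (q!i!j)) (r N)) k}"
    proof (rule open_fin_preimage)
      fix k assume "k \<in> {..<n}\<times>{..<m}"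
      then obtain i j where k: "k = (i,j)" "j < m" by auto
      have "continuous_map (power_top weak_topology m) weak_topology (\<lambda>x. x j)"
        unfolding power_top_def using k by (intro continuous_map_product_projection) auto
      then have "continuous_map (power_top weak_topology m) euclideanreal (blinfun_apply (d i) \<circ> (\<lambda>x. x j))"
        using weak_eval_cont continuous_map_compose by blast
      then show "continuous_map (power_top weak_topology m) euclideanreal ((\<lambda>(i,j) x. blinfun_apply (d i) (x j)) k)"
        using k by (simp add: o_def)
    qed auto
    moreover have "{x \<in> topspace (power_top (weak_topology :: 'a topology) m). \<forall>k\<in>{..<n}\<times>{..<m}. (\<lambda>(i,j) x. blinfun_apply (d i) (x j)) k x \<in> (\<lambda>(i,j). ball (of_rat (q!i!j)) (r N)) k} = V idx d"
      unfolding V_def idx by (auto simp: dist_real_def abs_minus_commute)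
    ultimately show ?thesis using idx by simp
  qed
  have "\<exists>\<V>. \<V> \<subseteq> V idx ` Y \<and> \<V> \<lesssim> K \<and> \<Union>(V idx ` Y) \<subseteq> \<Union>\<V>" for idx
  proof -
    have hl: "hL_le (power_top (weak_topology :: 'a topology) (fst idx)) K" using hL by blast
    have sub: "\<Union>(V idx ` Y) \<subseteq> topspace (power_top weak_topology (fst idx))"
      using Vopen openin_subset by blast
    have "\<forall>U\<in>V idx ` Y. openin (subtopology (power_top weak_topology (fst idx)) (\<Union>(V idx ` Y))) U"
    proof
      fix U assume "U \<in> V idx ` Y"
      then obtain d where "U = V idx d" "d \<in> Y" by blast
      then have "U \<subseteq> \<Union>(V idx ` Y)" "openin (power_top weak_topology (fst idx)) U" using Vopen[of idx d] by auto
      then show "openin (subtopology (power_top weak_topology (fst idx)) (\<Union>(V idx ` Y))) U"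
        unfolding openin_subtopology by (intro exI[of _ U]) auto
    qed
    then show ?thesis using hl sub unfolding hL_le_def by blast
  qed
  then obtain VV where VV: "\<And>idx. VV idx \<subseteq> V idx ` Y \<and> VV idx \<lesssim> K \<and> \<Union>(V idx ` Y) \<subseteq> \<Union>(VV idx)" by metis
  define pick where "pick idx v = (SOME d. d \<in> Y \<and> V idx d = v)" for idx v
  have pick: "pick idx v \<in> Y \<and> V idx (pick idx v) = v" if "v \<in> VV idx" for idx v
  proof -
    have "\<exists>d. d \<in> Y \<and> V idx d = v" using VV that by blast
    then show ?thesis unfolding pick_def by (rule someI_ex)
  qed
  define D where "D = (\<Union>idx\<in>(UNIV :: (nat \<times> nat \<times> rat list list) set). pick idx ` VV idx)"
  show "\<exists>D. D \<subseteq> Y \<and> D \<lesssim> K \<and> subtopology (power_top weak_star_topology n) Y closure_of D = Y"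
  proof (intro exI conjI)
    show DY: "D \<subseteq> Y" unfolding D_def using pick by blast
    show "D \<lesssim> K" unfolding D_def
    proof (rule UN_lepoll_countable[OF infK])
      show "countable (UNIV :: (nat \<times> nat \<times> rat list list) set)" by simp
      fix idx show "pick idx ` VV idx \<lesssim> K" using VV image_lepoll lepoll_trans by blast
    qed
    show "subtopology (power_top weak_star_topology n) Y closure_of D = Y"
    proof
      show "subtopology (power_top weak_star_topology n) Y closure_of D \<subseteq> Y"
        using closure_of_subset_topspace Ysub by fastforce
      show "Y \<subseteq> subtopology (power_top weak_star_topology n) Y closure_of D"
      proof
        fix y assume yY: "y \<in> Y"
        show "y \<in> subtopology (power_top weak_star_topology n) Y closure_of D"
          unfolding in_closure_of
        proof (intro conjI allI impI)
          show "y \<in> topspace (subtopology (power_top weak_star_topology n) Y)" using yY Ysub by auto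
          fix T assume "y \<in> T \<and> openin (subtopology (power_top weak_star_topology n) Y) T"
          then obtain W where W: "openin (power_top weak_star_topology n) W" "T = W \<inter> Y" "y \<in> W"
            by (auto simp: openin_subtopology)
          obtain P e where Pe: "finite P" "e > 0" "{G \<in> topspace (power_top weak_star_topology n). \<forall>i<n. \<forall>p\<in>P. \<bar>blinfun_apply (G i) p - blinfun_apply (y i) p\<bar> < e} \<subseteq> W"
            using wstar_prod_nbhd[OF W(1) W(3)] by blast
          obtain xs where xs: "set xs = P" using finite_list[OF Pe(1)] by blast
          define m where "m = length xs"
          define xb where "xb = (\<lambda>j. if j < m then xs!j else undefined)"
          obtain N where N: "r N < e / 2"
          proof -
            obtain N where "inverse (real (Suc N)) < e / 2" using reals_Archimedean[of "e/2"] Pe(2) by auto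
            then have "r N < e / 2" by (simp add: r_def inverse_eq_divide)
            then show ?thesis by (rule that)
          qed
          have "\<forall>i j. \<exists>qq::rat. \<bar>blinfun_apply (y i) (xs!j) - of_rat qq\<bar> < r N"
          proof (intro allI)
            fix i j
            have "r N > 0" unfolding r_def by simp
            then obtain qq :: rat where "blinfun_apply (y i) (xs!j) - r N < of_rat qq" "of_rat qq < blinfun_apply (y i) (xs!j) + r N"
              using of_rat_dense[of "blinfun_apply (y i) (xs!j) - r N" "blinfun_apply (y i) (xs!j) + r N"] by auto
            then show "\<exists>qq::rat. \<bar>blinfun_apply (y i) (xs!j) - of_rat qq\<bar> < r N" by (intro exI[of _ qq]) auto
          qed
          then obtain qq where qq: "\<And>i j. \<bar>blinfun_apply (y i) (xs!j) - of_rat (qq i j)\<bar> < r N" by metis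
          define q where "q = map (\<lambda>i. map (\<lambda>j. qq i j) [0..<m]) [0..<n]"
          have qnth: "i < n \<Longrightarrow> j < m \<Longrightarrow> q!i!j = qq i j" for i j unfolding q_def by simp
          define idx where "idx = (m, N, q)"
          have xbtop: "xb \<in> topspace (power_top (weak_topology :: 'a topology) m)"
            unfolding topspace_power_top xb_def by (auto simp: PiE_iff extensional_def)
          have "xb \<in> V idx y" unfolding V_def idx_def using xbtop qq qnth by (auto simp: xb_def)
          then have "xb \<in> \<Union>(VV idx)" using VV yY by blast
          then obtain v where v: "v \<in> VV idx" "xb \<in> v" by blast
          define d where "d = pick idx v"
          have dY: "d \<in> Y" and dV: "xb \<in> V idx d" using pick[OF v(1)] v(2) unfolding d_def by auto
          have dD: "d \<in> D" unfolding D_def d_def using v(1) by blast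
          have "d \<in> W"
          proof -
            have "\<bar>blinfun_apply (d i) p - blinfun_apply (y i) p\<bar> < e" if ip: "i < n" "p \<in> P" for i p
            proof -
              obtain j where j: "j < m" "p = xs!j" using ip(2) xs unfolding m_def by (metis in_set_conv_nth)
              have "\<bar>blinfun_apply (d i) (xs!j) - of_rat (qq i j)\<bar> < r N"
                using dV ip(1) j qnth unfolding V_def idx_def by (auto simp: xb_def)
              with qq[of i j] N show ?thesis using j(2) by (simp only:)
            qed
            then show ?thesis using Pe(3) dY Ysub by blast
          qed
          then show "\<exists>d. d \<in> D \<and> d \<in> T" using dD dY W(2) by blast
        qed
      qed
    qed
  qed
qed

lemma dirA:
  fixes K :: "'k set"
  assumes infK: "infinite K"
    and hd: "\<forall>k::nat. hd_le (power_top (weak_star_topology :: ('a::real_normed_vector \<Rightarrow>\<^sub>L real) topology) k) K"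
  shows "hL_le (power_top (weak_topology :: 'a topology) n) K"
  unfolding hL_le_def
proof (intro allI impI)
  fix Y \<U>
  assume Ysub: "Y \<subseteq> topspace (power_top (weak_topology :: 'a topology) n)"
    and UU: "(\<forall>U\<in>\<U>. openin (subtopology (power_top weak_topology n) Y) U) \<and> Y \<subseteq> \<Union>\<U>"
  have "\<forall>y\<in>Y. \<exists>U Ls. U \<in> \<U> \<and> y \<in> Bp Ls \<and> Bp Ls \<inter> Y \<subseteq> U"
  proof
    fix y assume yY: "y \<in> Y"
    then obtain U where U: "U \<in> \<U>" "y \<in> U" using UU by blast
    then obtain W where W: "openin (power_top weak_topology n) W" "U = W \<inter> Y"
      using UU by (auto simp: openin_subtopology)
    obtain Ls where "y \<in> Bp Ls" "Bp Ls \<inter> topspace (power_top weak_topology n) \<subseteq> W"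
      using weak_prod_nbhd[OF W(1)] U W by blast
    then show "\<exists>U Ls. U \<in> \<U> \<and> y \<in> Bp Ls \<and> Bp Ls \<inter> Y \<subseteq> U" using U W Ysub by blast
  qed
  then obtain Uy Ly where UL: "\<And>y. y \<in> Y \<Longrightarrow> Uy y \<in> \<U> \<and> y \<in> Bp (Ly y) \<and> Bp (Ly y) \<inter> Y \<subseteq> Uy y" by metis
  define tp where "tp y = map (\<lambda>(i,f,a,b). (i,a,b)) (Ly y)" for y
  define fp :: "(nat \<Rightarrow> 'a) \<Rightarrow> nat \<Rightarrow> ('a \<Rightarrow>\<^sub>L real)"
    where "fp y = (\<lambda>l. if l < length (Ly y) then fst (snd (Ly y ! l)) else undefined)" for y
  define Phi where "Phi \<tau> = fp ` {y \<in> Y. tp y = \<tau>}" for \<tau>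
  have Phisub: "Phi \<tau> \<subseteq> topspace (power_top (weak_star_topology :: ('a \<Rightarrow>\<^sub>L real) topology) (length \<tau>))" for \<tau>
    unfolding Phi_def topspace_power_top fp_def tp_def by (auto simp: PiE_iff extensional_def split: if_split_asm)
  have "\<exists>D. D \<subseteq> Phi \<tau> \<and> D \<lesssim> K \<and> subtopology (power_top weak_star_topology (length \<tau>)) (Phi \<tau>) closure_of D = Phi \<tau>" for \<tau>
    using hd Phisub unfolding hd_le_def by blast
  then obtain D where D: "\<And>\<tau>. D \<tau> \<subseteq> Phi \<tau> \<and> D \<tau> \<lesssim> K \<and> subtopology (power_top weak_star_topology (length \<tau>)) (Phi \<tau>) closure_of (D \<tau>) = Phi \<tau>"
    by metis
  define pick where "pick \<tau> F = (SOME y. y \<in> Y \<and> tp y = \<tau> \<and> fp y = F)" for \<tau> F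
  have pick: "pick \<tau> F \<in> Y \<and> tp (pick \<tau> F) = \<tau> \<and> fp (pick \<tau> F) = F" if "F \<in> Phi \<tau>" for \<tau> F
  proof -
    have "\<exists>y. y \<in> Y \<and> tp y = \<tau> \<and> fp y = F" using that unfolding Phi_def by blast
    then show ?thesis unfolding pick_def by (rule someI_ex)
  qed
  define \<V> where "\<V> = (\<Union>\<tau>\<in>(UNIV :: (nat \<times> rat \<times> rat) list set). (\<lambda>F. Uy (pick \<tau> F)) ` D \<tau>)"
  show "\<exists>\<V>. \<V> \<subseteq> \<U> \<and> \<V> \<lesssim> K \<and> Y \<subseteq> \<Union>\<V>"
  proof (intro exI conjI)
    show "\<V> \<subseteq> \<U>" unfolding \<V>_def using UL pick D by blast
    show "\<V> \<lesssim> K" unfolding \<V>_def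
    proof (rule UN_lepoll_countable[OF infK])
      show "countable (UNIV :: (nat \<times> rat \<times> rat) list set)" by simp
      fix \<tau> show "(\<lambda>F. Uy (pick \<tau> F)) ` D \<tau> \<lesssim> K" using D image_lepoll lepoll_trans by blast
    qed
    show "Y \<subseteq> \<Union>\<V>"
    proof
      fix z assume zY: "z \<in> Y"
      define \<tau> where "\<tau> = tp z"
      define k where "k = length \<tau>"
      have lenL: "length (Ly z) = k" unfolding k_def \<tau>_def tp_def by simp
      define Op where "Op = {G \<in> topspace (power_top (weak_star_topology :: ('a \<Rightarrow>\<^sub>L real) topology) k).
          \<forall>l\<in>{..<k}. (\<lambda>l G. blinfun_apply (G l) (z (fst (\<tau>!l)))) l G \<in> (\<lambda>l. {of_rat (fst (snd (\<tau>!l)))<..<of_rat (snd (snd (\<tau>!l)))}) l}"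
      have Opopen: "openin (power_top weak_star_topology k) Op"
        unfolding Op_def
      proof (rule open_fin_preimage)
        fix l assume l: "l \<in> {..<k}"
        have "continuous_map (power_top weak_star_topology k) weak_star_topology (\<lambda>G. G l)"
          unfolding power_top_def using l by (intro continuous_map_product_projection) auto
        then have "continuous_map (power_top weak_star_topology k) euclideanreal ((\<lambda>f. blinfun_apply f (z (fst (\<tau>!l)))) \<circ> (\<lambda>G. G l))"
          using wstar_eval_cont continuous_map_compose by blast
        then show "continuous_map (power_top weak_star_topology k) euclideanreal ((\<lambda>l G. blinfun_apply (G l) (z (fst (\<tau>!l)))) l)"
          by (simp add: o_def)
      qed auto
      have fpzPhi: "fp z \<in> Phi \<tau>" unfolding Phi_def \<tau>_def using zY by blast
      have fpzOp: "fp z \<in> Op"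
      proof -
        have "fp z \<in> topspace (power_top weak_star_topology k)" using Phisub fpzPhi k_def by blast
        moreover have "of_rat (fst (snd (\<tau>!l))) < blinfun_apply (fp z l) (z (fst (\<tau>!l))) \<and>
             blinfun_apply (fp z l) (z (fst (\<tau>!l))) < of_rat (snd (snd (\<tau>!l)))" if l: "l < k" for l
        proof -
          obtain i f a b where e: "Ly z ! l = (i,f,a,b)" by (cases "Ly z ! l") auto
          have "(i,f,a,b) \<in> set (Ly z)" using e l lenL by (metis nth_mem)
          then have "of_rat a < blinfun_apply f (z i) \<and> blinfun_apply f (z i) < of_rat b"
            using UL[OF zY] unfolding Bp_def by fastforce
          moreover have "\<tau>!l = (i,a,b)" unfolding \<tau>_def tp_def using e l lenL by simp
          moreover have "fp z l = f" unfolding fp_def using e l lenL by simp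
          ultimately show ?thesis by simp
        qed
        ultimately show ?thesis unfolding Op_def by auto
      qed
      have "fp z \<in> subtopology (power_top weak_star_topology k) (Phi \<tau>) closure_of (D \<tau>)"
        using D fpzPhi k_def by metis
      moreover have "openin (subtopology (power_top weak_star_topology k) (Phi \<tau>)) (Op \<inter> Phi \<tau>)"
        using Opopen by (auto simp: openin_subtopology)
      ultimately obtain F where F: "F \<in> D \<tau>" "F \<in> Op \<inter> Phi \<tau>"
        unfolding in_closure_of using fpzOp fpzPhi by blast
      define y where "y = pick \<tau> F"
      have y: "y \<in> Y" "tp y = \<tau>" "fp y = F" using pick[of F \<tau>] F unfolding y_def by auto
      have lenLy: "length (Ly y) = k" using y(2) unfolding k_def tp_def by auto
      have "z \<in> Bp (Ly y)"
        unfolding Bp_def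
      proof (intro CollectI ballI)
        fix x assume "x \<in> set (Ly y)"
        then obtain l where l: "l < k" "Ly y ! l = x" using lenLy by (metis in_set_conv_nth)
        obtain i f a b where e: "x = (i,f,a,b)" by (cases x) auto
        have "\<tau>!l = (i,a,b)" using y(2) l e lenLy unfolding tp_def by auto
        moreover have "F l = f" using y(3) l e lenLy unfolding fp_def by auto
        moreover have "of_rat (fst (snd (\<tau>!l))) < blinfun_apply (F l) (z (fst (\<tau>!l))) \<and>
             blinfun_apply (F l) (z (fst (\<tau>!l))) < of_rat (snd (snd (\<tau>!l)))"
          using F(2) l unfolding Op_def by auto
        ultimately show "case x of (i, f, a, b) \<Rightarrow> of_rat a < blinfun_apply f (z i) \<and> blinfun_apply f (z i) < of_rat b"
          using e by simp
      qed
      then have "z \<in> Uy y" using UL[OF y(1)] zY by blast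
      moreover have "Uy y \<in> \<V>" unfolding \<V>_def y_def using F(1) by blast
      ultimately show "z \<in> \<Union>\<V>" by blast
    qed
  qed
qed



theorem mainTheorem10:
  fixes K :: "'k set"
  assumes "infinite K"
  shows "(\<forall>n::nat. hL_le (power_top (weak_topology :: 'a::banach topology) n) K) \<longleftrightarrow>
         (\<forall>n::nat. hd_le (power_top (weak_star_topology :: ('a \<Rightarrow>\<^sub>L real) topology) n) K)"
proof
  assume "\<forall>n::nat. hL_le (power_top (weak_topology :: 'a::banach topology) n) K"
  then show "\<forall>n::nat. hd_le (power_top (weak_star_topology :: ('a \<Rightarrow>\<^sub>L real) topology) n) K"
    using dirB[OF assms] by blast
next
  assume "\<forall>n::nat. hd_le (power_top (weak_star_topology :: ('a \<Rightarrow>\<^sub>L real) topology) n) K"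
  then show "\<forall>n::nat. hL_le (power_top (weak_topology :: 'a::banach topology) n) K"
    using dirA[OF assms] by blast
qed

end
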